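(* Let $n_\text{in}, n_\text{out} \ge 1$, let $\mathbf{W}\in\mathbb{R}^{n_\text{out}\times n_\text{in}}$, $\mathbf{b}\in\mathbb{R}^{n_\text{out}}$, $\mathbf{c}\in\mathbb{R}^{n_\text{in}}$, and let $\mathbf{U}=[\mathbf{u}_1\,\mathbf{u}_2\,\ldots\,\mathbf{u}_{n_\text{in}}]\in\mathbb{R}^{n_\text{in}\times n_\text{in}}$. Consider the input parallelotope $\mathcal{P}(\mathbf{U})=\{\mathbf{c}+\sum_{j=1}^{n_\text{in}}\lambda_j\mathbf{u}_j:\lambda\in[0,1]^{n_\text{in}}\}$ and its pre-activation image $\mathcal{P}(\mathbf{V})=\{\mathbf{W}\mathbf{x}+\mathbf{b}:\mathbf{x}\in\mathcal{P}(\mathbf{U})\}$, where $\mathbf{V}=\mathbf{W}\mathbf{U}=[\mathbf{v}_1\,\ldots\,\mathbf{v}_{n_\text{in}}]$. Fix $r\in[0,1]$ and split $\mathcal{P}(\mathbf{U})$ along $\mathbf{u}_1$ into the ``left'' parallelotope $\mathcal{P}(\mathbf{U}^L)=\{\mathbf{c}+\lambda_1 r\mathbf{u}_1+\sum_{j\ge2}\lambda_j\mathbf{u}_j:\lambda\in[0,1]^{n_\text{in}}\}$ and the ``right'' parallelotope $\mathcal{P}(\mathbf{U}^R)=\{\mathbf{c}+r\mathbf{u}_1+\lambda_1(1-r)\mathbf{u}_1+\sum_{j\ge2}\lambda_j\mathbf{u}_j:\lambda\in[0,1]^{n_\text{in}}\}$, and let $\mathcal{P}(\mathbf{V}^L),\mathcal{P}(\mathbf{V}^R)$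 be their images under $\mathbf{x}\mapsto\mathbf{W}\mathbf{x}+\mathbf{b}$ (so $\mathbf{V}^L=\mathbf{W}\mathbf{U}^L$, $\mathbf{V}^R=\mathbf{W}\mathbf{U}^R$). Write $v_{j,i}$ for the $i$-th coordinate of $\mathbf{v}_j$ and $z_i=\sum_{j=2}^{n_\text{in}}|v_{j,i}|$. Then \[ V_\text{red}:=\mathrm{Vol}(\mathcal{B}(\mathbf{V}))-\mathrm{Vol}\big(\mathcal{B}(\mathbf{V}^L)\cup\mathcal{B}(\mathbf{V}^R)\big) =\sum_{k=2}^{n_\text{out}}\big(1-r^k-(1-r)^k\big)\sum_{C_i\in P_k(C)}\Big[\prod_{j\in C_i}|v_{1,j}|\Big]\prod_{t\in C\setminus C_i}z_t , \] where $C=\{1,\ldots,n_\text{out}\}$ and $P_k(C)$ is the set of subsets of $C$ with exactly $k$ elements.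
   Context: For a parallelotope $\mathcal{P}\subset\mathbb{R}^{n_\text{out}}$ (such as $\mathcal{P}(\mathbf{V})$), $\mathcal{B}(\cdot)$ denotes the smallest axis-aligned hyperrectangle containing it, i.e., the Cartesian product over coordinates $i$ of the interval between the minimal and maximal $i$-th coordinate of its vertices; $\mathrm{Vol}$ denotes $n_\text{out}$-dimensional Lebesgue volume. In particular $\mathrm{Vol}(\mathcal{B}(\mathbf{V}))=\prod_{i=1}^{n_\text{out}}\sum_{j=1}^{n_\text{in}}|v_{j,i}|$. *)

theory Defs
  imports "HOL-Analysis.Analysis"
begin

definition paral :: "real^'n \<Rightarrow> ('j::finite \<Rightarrow> real^'n) \<Rightarrow> (real^'n) set" where
  "paral c u = {c + (\<Sum>j\<in>UNIV. l j *\<^sub>R u j) | l. \<forall>j. 0 \<le> l j \<and> l j \<le> 1}"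

definition bbox :: "(real^'n) set \<Rightarrow> (real^'n) set" where
  "bbox S = cbox (\<chi> i. Inf ((\<lambda>y. y $ i) ` S)) (\<chi> i. Sup ((\<lambda>y. y $ i) ` S))"

end

theory Submission imports Defs begin

lemma meas_cbox:
  fixes a b :: "real^'n"
  assumes "\<And>i. a$i \<le> b$i"
  shows "measure lebesgue (cbox a b) = (\<Prod>i\<in>UNIV. b$i - a$i)"
proof -
  have "a \<in> cbox a b" using assms by (simp add: mem_box_cart)
  then have "cbox a b \<noteq> {}" by blast
  then show ?thesis using content_cbox_cart[of a b] by simp
qed

lemma int_cbox:
  fixes a b c d :: "real^'n"
  shows "cbox a b \<inter> cbox c d = cbox (\<chi> i. max (a$i) (c$i)) (\<chi> i. min (b$i) (d$i))"
  by (auto simp: mem_box_cart)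

lemma image_paral:
  fixes W :: "real^'i^'o"
  shows "(\<lambda>x. W *v x + b) ` paral c u = paral (W *v c + b) (\<lambda>j. W *v u j)"
proof -
  have lin: "W *v (c + (\<Sum>j\<in>UNIV. l j *\<^sub>R u j)) + b = (W *v c + b) + (\<Sum>j\<in>UNIV. l j *\<^sub>R (W *v u j))" for l
    using linear_sum[OF matrix_vector_mul_linear[of W], of "\<lambda>j. l j *\<^sub>R u j" UNIV]
    by (simp add: matrix_vector_right_distrib matrix_vector_mult_scaleR)
  show ?thesis
  proof (rule set_eqI, rule iffI)
    fix y assume "y \<in> (\<lambda>x. W *v x + b) ` paral c u"
    then obtain l where y: "y = W *v (c + (\<Sum>j\<in>UNIV. l j *\<^sub>R u j)) + b" and l: "\<forall>j. 0 \<le> l j \<and> l j \<le> 1"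
      unfolding paral_def by blast
    have "y = W *v c + b + (\<Sum>j\<in>UNIV. l j *\<^sub>R (W *v u j))" using y lin by simp
    then show "y \<in> paral (W *v c + b) (\<lambda>j. W *v u j)" unfolding paral_def using l by blast
  next
    fix y assume "y \<in> paral (W *v c + b) (\<lambda>j. W *v u j)"
    then obtain l where y: "y = W *v c + b + (\<Sum>j\<in>UNIV. l j *\<^sub>R (W *v u j))" and l: "\<forall>j. 0 \<le> l j \<and> l j \<le> 1"
      unfolding paral_def by blast
    have "y = W *v (c + (\<Sum>j\<in>UNIV. l j *\<^sub>R u j)) + b" using y lin by simp
    moreover have "c + (\<Sum>j\<in>UNIV. l j *\<^sub>R u j) \<in> paral c u" using l unfolding paral_def by blast
    ultimately show "y \<in> (\<lambda>x. W *v x + b) ` paral c u" by blast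
  qed
qed

lemma bbox_paral:
  fixes p :: "real^'n" and g :: "'j::finite \<Rightarrow> real^'n"
  shows "bbox (paral p g) = cbox (\<chi> i. p$i + (\<Sum>j\<in>UNIV. min 0 (g j $ i))) (\<chi> i. p$i + (\<Sum>j\<in>UNIV. max 0 (g j $ i)))"
proof -
  have co: "(\<lambda>y. y $ i) ` paral p g = {p$i + (\<Sum>j\<in>UNIV. l j * g j $ i) | l. \<forall>j. 0 \<le> l j \<and> l j \<le> 1}" for i
    unfolding paral_def
  proof (rule set_eqI, rule iffI)
    fix x assume "x \<in> (\<lambda>y. y $ i) ` {p + (\<Sum>j\<in>UNIV. l j *\<^sub>R g j) |l. \<forall>j. 0 \<le> l j \<and> l j \<le> 1}"
    then show "x \<in> {p$i + (\<Sum>j\<in>UNIV. l j * g j $ i) | l. \<forall>j. 0 \<le> l j \<and> l j \<le> 1}" by auto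
  next
    fix x assume "x \<in> {p$i + (\<Sum>j\<in>UNIV. l j * g j $ i) | l. \<forall>j. 0 \<le> l j \<and> l j \<le> 1}"
    then obtain l where x: "x = p$i + (\<Sum>j\<in>UNIV. l j * g j $ i)" and l: "\<forall>j. 0 \<le> l j \<and> l j \<le> 1" by blast
    have "x = (p + (\<Sum>j\<in>UNIV. l j *\<^sub>R g j)) $ i" using x by simp
    moreover have "p + (\<Sum>j\<in>UNIV. l j *\<^sub>R g j) \<in> {p + (\<Sum>j\<in>UNIV. l j *\<^sub>R g j) |l. \<forall>j. 0 \<le> l j \<and> l j \<le> 1}"
      using l by blast
    ultimately show "x \<in> (\<lambda>y. y $ i) ` {p + (\<Sum>j\<in>UNIV. l j *\<^sub>R g j) |l. \<forall>j. 0 \<le> l j \<and> l j \<le> 1}" by blast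
  qed
  have inf: "Inf ((\<lambda>y. y $ i) ` paral p g) = p$i + (\<Sum>j\<in>UNIV. min 0 (g j $ i))" for i
    unfolding co
  proof (rule cInf_eq_minimum)
    let ?l = "\<lambda>j. if g j $ i < 0 then 1 else (0::real)"
    have "(\<Sum>j\<in>UNIV. ?l j * g j $ i) = (\<Sum>j\<in>UNIV. min 0 (g j $ i))"
      by (rule sum.cong) auto
    then show "p$i + (\<Sum>j\<in>UNIV. min 0 (g j $ i)) \<in> {p$i + (\<Sum>j\<in>UNIV. l j * g j $ i) | l. \<forall>j. 0 \<le> l j \<and> l j \<le> 1}"
      by (intro CollectI exI[of _ ?l]) auto
  next
    fix x assume "x \<in> {p$i + (\<Sum>j\<in>UNIV. l j * g j $ i) | l. \<forall>j. 0 \<le> l j \<and> l j \<le> 1}"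
    then obtain l where l: "\<forall>j. 0 \<le> l j \<and> l j \<le> 1" and x: "x = p$i + (\<Sum>j\<in>UNIV. l j * g j $ i)" by auto
    have "min 0 (g j $ i) \<le> l j * g j $ i" for j
      using l[rule_format, of j]
      by (cases "g j $ i \<ge> 0") (auto intro: mult_nonneg_nonneg simp: mult_le_cancel_right1 mult_left_le_one_le)
    then show "p$i + (\<Sum>j\<in>UNIV. min 0 (g j $ i)) \<le> x" unfolding x by (simp add: sum_mono)
  qed
  have sup: "Sup ((\<lambda>y. y $ i) ` paral p g) = p$i + (\<Sum>j\<in>UNIV. max 0 (g j $ i))" for i
    unfolding co
  proof (rule cSup_eq_maximum)
    let ?l = "\<lambda>j. if g j $ i > 0 then 1 else (0::real)"
    have "(\<Sum>j\<in>UNIV. ?l j * g j $ i) = (\<Sum>j\<in>UNIV. max 0 (g j $ i))"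
      by (rule sum.cong) auto
    then show "p$i + (\<Sum>j\<in>UNIV. max 0 (g j $ i)) \<in> {p$i + (\<Sum>j\<in>UNIV. l j * g j $ i) | l. \<forall>j. 0 \<le> l j \<and> l j \<le> 1}"
      by (intro CollectI exI[of _ ?l]) auto
  next
    fix x assume "x \<in> {p$i + (\<Sum>j\<in>UNIV. l j * g j $ i) | l. \<forall>j. 0 \<le> l j \<and> l j \<le> 1}"
    then obtain l where l: "\<forall>j. 0 \<le> l j \<and> l j \<le> 1" and x: "x = p$i + (\<Sum>j\<in>UNIV. l j * g j $ i)" by auto
    have "l j * g j $ i \<le> max 0 (g j $ i)" for j
      using l[rule_format, of j]
      by (cases "g j $ i \<ge> 0") (auto simp: mult_left_le_one_le mult_nonneg_nonpos)
    then show "x \<le> p$i + (\<Sum>j\<in>UNIV. max 0 (g j $ i))" unfolding x by (simp add: sum_mono)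
  qed
  show ?thesis unfolding bbox_def inf sup ..
qed

lemma alg:
  fixes a z :: "'o::finite \<Rightarrow> real" and r :: real
  shows "(\<Prod>i\<in>UNIV. a i + z i) - ((\<Prod>i\<in>UNIV. r * a i + z i) + (\<Prod>i\<in>UNIV. (1 - r) * a i + z i) - (\<Prod>i\<in>UNIV. z i))
    = (\<Sum>k = 2..CARD('o). (1 - r ^ k - (1 - r) ^ k) *
        (\<Sum>Ci\<in>{S :: 'o set. card S = k}. (\<Prod>i\<in>Ci. a i) * (\<Prod>t\<in>UNIV - Ci. z t)))"
proof -
  define F where "F X = (\<Prod>i\<in>X. a i) * (\<Prod>t\<in>UNIV - X. z t)" for X
  define h where "h X = (1 - r ^ card X - (1 - r) ^ card X) * F X" for X
  have e: "(\<Prod>i\<in>UNIV. s * a i + z i) = (\<Sum>X\<in>UNIV. s ^ card X * F X)" for s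
    using prod_add[of UNIV "\<lambda>i. s * a i" z]
    by (simp add: prod.distrib prod_constant mult.assoc F_def)
  have e1: "(\<Prod>i\<in>UNIV. a i + z i) = (\<Sum>X\<in>UNIV. F X)" using e[of 1] by simp
  have "(\<Prod>i\<in>UNIV. a i + z i) - ((\<Prod>i\<in>UNIV. r * a i + z i) + (\<Prod>i\<in>UNIV. (1 - r) * a i + z i) - (\<Prod>i\<in>UNIV. z i))
      = (\<Sum>X\<in>UNIV. h X) + (\<Prod>i\<in>UNIV. z i)"
    unfolding e1 e h_def by (simp add: sum_subtractf sum.distrib algebra_simps)
  also have "(\<Sum>X\<in>UNIV. h X) = (\<Sum>k\<in>{0..CARD('o)}. \<Sum>X\<in>{S :: 'o set. card S = k}. h X)"
  proof -
    have "card ` (UNIV :: 'o set set) \<subseteq> {0..CARD('o)}" by (auto intro!: card_mono)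
    from sum.group[OF _ finite_atLeastAtMost this, of h] show ?thesis by simp
  qed
  also have "\<dots> = (\<Sum>X\<in>{S :: 'o set. card S = 0}. h X) + (\<Sum>X\<in>{S :: 'o set. card S = 1}. h X)
      + (\<Sum>k = 2..CARD('o). \<Sum>X\<in>{S :: 'o set. card S = k}. h X)"
  proof -
    have c: "1 \<le> CARD('o)" by (simp add: Suc_le_eq)
    show ?thesis
      using c by (simp add: sum.atLeast_Suc_atMost numeral_2_eq_2)
  qed
  also have "(\<Sum>X\<in>{S :: 'o set. card S = 0}. h X) = - (\<Prod>i\<in>UNIV. z i)"
  proof -
    have "{S :: 'o set. card S = 0} = {{}}" by auto
    then show ?thesis by (simp add: h_def F_def)
  qed
  also have "(\<Sum>X\<in>{S :: 'o set. card S = 1}. h X) = 0"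
    by (simp add: h_def)
  finally show ?thesis by (simp add: h_def F_def sum_distrib_left)
qed

lemma bbox_upd:
  fixes q :: "real^'n" and g :: "'j::finite \<Rightarrow> real^'n"
  shows "bbox (paral q (g(j1 := w))) = cbox (\<chi> i. q$i + min 0 (w$i) + (\<Sum>j\<in>UNIV-{j1}. min 0 (g j $ i)))
            (\<chi> i. q$i + max 0 (w$i) + (\<Sum>j\<in>UNIV-{j1}. max 0 (g j $ i)))"
proof -
  have s: "(\<Sum>j\<in>UNIV. f ((g(j1:=w)) j)) = f w + (\<Sum>j\<in>UNIV-{j1}. f (g j))" for f :: "real^'n \<Rightarrow> real"
  proof -
    have "(\<Sum>j\<in>UNIV. f ((g(j1:=w)) j)) = f ((g(j1:=w)) j1) + (\<Sum>j\<in>UNIV-{j1}. f ((g(j1:=w)) j))"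
      by (rule sum.remove) auto
    also have "(\<Sum>j\<in>UNIV-{j1}. f ((g(j1:=w)) j)) = (\<Sum>j\<in>UNIV-{j1}. f (g j))"
      by (rule sum.cong) auto
    finally show ?thesis by simp
  qed
  show ?thesis unfolding bbox_paral
    using s[of "\<lambda>x. min 0 (x $ _)"] s[of "\<lambda>x. max 0 (x $ _)"] by (simp add: add.assoc)
qed

lemma meas_box_gen:
  fixes q w :: "real^'n"
  assumes "\<And>i. m i \<le> M i"
  shows "measure lebesgue (cbox (\<chi> i. q$i + min 0 (w$i) + m i) (\<chi> i. q$i + max 0 (w$i) + M i))
     = (\<Prod>i\<in>UNIV. \<bar>w$i\<bar> + (M i - m i))"
proof -
  have "measure lebesgue (cbox (\<chi> i. q$i + min 0 (w$i) + m i) (\<chi> i. q$i + max 0 (w$i) + M i))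
     = (\<Prod>i\<in>UNIV. (q$i + max 0 (w$i) + M i) - (q$i + min 0 (w$i) + m i))"
  proof -
    have "(\<chi> i. q$i + min 0 (w$i) + m i) $ i \<le> (\<chi> i. q$i + max 0 (w$i) + M i) $ i" for i
      using assms[of i] by (simp add: min_def max_def)
    from meas_cbox[OF this] show ?thesis by simp
  qed
  also have "\<dots> = (\<Prod>i\<in>UNIV. \<bar>w$i\<bar> + (M i - m i))"
    by (rule prod.cong) (auto simp: min_def max_def)
  finally show ?thesis .
qed

lemma coord:
  fixes r v q m M :: real
  assumes "0 \<le> r" "r \<le> 1" "m \<le> M"
  shows "max (q + min 0 (r * v) + m) (q + r * v + min 0 ((1-r) * v) + m) \<le> min (q + max 0 (r * v) + M) (q + r * v + max 0 ((1-r) * v) + M)"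
    and "min (q + max 0 (r * v) + M) (q + r * v + max 0 ((1-r) * v) + M) - max (q + min 0 (r * v) + m) (q + r * v + min 0 ((1-r) * v) + m) = M - m"
proof -
  have e: "(1-r) * v = v - r * v" by (simp add: algebra_simps)
  have c: "(0 \<le> r * v \<and> r * v \<le> v) \<or> (v \<le> r * v \<and> r * v \<le> 0)"
  proof (cases "v \<ge> 0")
    case True then show ?thesis using assms by (auto simp: mult_left_le_one_le)
  next
    case False
    have "r * v \<le> 0" using False assms by (intro mult_nonneg_nonpos) auto
    moreover have "(1-r) * v \<le> 0" using False assms by (intro mult_nonneg_nonpos) auto
    ultimately show ?thesis using e by auto
  qed
  have g1: "max (q + min 0 t + m) (q + t + min 0 (v - t) + m) \<le> min (q + max 0 t + M) (q + t + max 0 (v - t) + M)"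
    and g2: "min (q + max 0 t + M) (q + t + max 0 (v - t) + M) - max (q + min 0 t + m) (q + t + min 0 (v - t) + m) = M - m"
    if "(0 \<le> t \<and> t \<le> v) \<or> (v \<le> t \<and> t \<le> 0)" for t
    using that assms(3) by (auto simp: min_def max_def)
  show "max (q + min 0 (r * v) + m) (q + r * v + min 0 ((1-r) * v) + m) \<le> min (q + max 0 (r * v) + M) (q + r * v + max 0 ((1-r) * v) + M)"
    unfolding e by (rule g1[OF c])
  show "min (q + max 0 (r * v) + M) (q + r * v + max 0 ((1-r) * v) + M) - max (q + min 0 (r * v) + m) (q + r * v + min 0 ((1-r) * v) + m) = M - m"
    unfolding e by (rule g2[OF c])
qed


theorem lemma1:
  fixes W :: "real^'i^'o" and b :: "real^'o" and c :: "real^'i"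
    and U :: "real^'i^'i" and j1 :: 'i and r :: real
  assumes "0 \<le> r" and "r \<le> 1"
  shows
   "measure lebesgue (bbox ((\<lambda>x. W *v x + b) ` paral c (\<lambda>j. column j U)))
    - measure lebesgue
        (bbox ((\<lambda>x. W *v x + b) ` paral c ((\<lambda>j. column j U)(j1 := r *\<^sub>R column j1 U)))
         \<union> bbox ((\<lambda>x. W *v x + b) ` paral (c + r *\<^sub>R column j1 U)
                   ((\<lambda>j. column j U)(j1 := (1 - r) *\<^sub>R column j1 U))))
    = (\<Sum>k = 2..CARD('o).
        (1 - r ^ k - (1 - r) ^ k) *
        (\<Sum>Ci\<in>{S :: 'o set. card S = k}.
           (\<Prod>i\<in>Ci. \<bar>(W *v column j1 U) $ i\<bar>) *
           (\<Prod>t\<in>UNIV - Ci. (\<Sum>j\<in>UNIV - {j1}. \<bar>(W *v column j U) $ t\<bar>))))"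
proof -
  define g where "g j = W *v column j U" for j
  define P where "P = W *v c + b"
  define v where "v i = g j1 $ i" for i
  define m where "m i = (\<Sum>j\<in>UNIV-{j1}. min 0 (g j $ i))" for i
  define M where "M i = (\<Sum>j\<in>UNIV-{j1}. max 0 (g j $ i))" for i
  define z where "z t = (\<Sum>j\<in>UNIV - {j1}. \<bar>g j $ t\<bar>)" for t
  have mM: "m i \<le> M i" for i unfolding m_def M_def by (rule sum_mono) auto
  have Mm: "M i - m i = z i" for i
    unfolding m_def M_def z_def sum_subtractf[symmetric] by (rule sum.cong) (auto simp: min_def max_def)
  have F: "bbox ((\<lambda>x. W *v x + b) ` paral c (\<lambda>j. column j U))
      = cbox (\<chi> i. P$i + min 0 (g j1 $ i) + m i) (\<chi> i. P$i + max 0 (g j1 $ i) + M i)"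
  proof -
    have "(\<lambda>x. W *v x + b) ` paral c (\<lambda>j. column j U) = paral P g"
      by (simp add: image_paral P_def g_def[abs_def])
    moreover have "g(j1 := g j1) = g" by simp
    ultimately show ?thesis using bbox_upd[of P g j1 "g j1"] by (simp only: m_def M_def)
  qed
  have L: "bbox ((\<lambda>x. W *v x + b) ` paral c ((\<lambda>j. column j U)(j1 := r *\<^sub>R column j1 U)))
      = cbox (\<chi> i. P$i + min 0 ((r *\<^sub>R g j1) $ i) + m i) (\<chi> i. P$i + max 0 ((r *\<^sub>R g j1) $ i) + M i)"
  proof -
    have "(\<lambda>j. W *v ((\<lambda>j. column j U)(j1 := r *\<^sub>R column j1 U)) j) = g(j1 := r *\<^sub>R g j1)"
      by (auto simp: fun_eq_iff g_def matrix_vector_mult_scaleR)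
    then have "(\<lambda>x. W *v x + b) ` paral c ((\<lambda>j. column j U)(j1 := r *\<^sub>R column j1 U)) = paral P (g(j1 := r *\<^sub>R g j1))"
      by (simp add: image_paral P_def)
    then show ?thesis by (simp only: bbox_upd m_def M_def)
  qed
  have R: "bbox ((\<lambda>x. W *v x + b) ` paral (c + r *\<^sub>R column j1 U) ((\<lambda>j. column j U)(j1 := (1 - r) *\<^sub>R column j1 U)))
      = cbox (\<chi> i. (P + r *\<^sub>R g j1)$i + min 0 (((1 - r) *\<^sub>R g j1) $ i) + m i)
             (\<chi> i. (P + r *\<^sub>R g j1)$i + max 0 (((1 - r) *\<^sub>R g j1) $ i) + M i)"
  proof -
    have "(\<lambda>j. W *v ((\<lambda>j. column j U)(j1 := (1 - r) *\<^sub>R column j1 U)) j) = g(j1 := (1 - r) *\<^sub>R g j1)"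
      by (auto simp: fun_eq_iff g_def matrix_vector_mult_scaleR)
    moreover have "W *v (c + r *\<^sub>R column j1 U) + b = P + r *\<^sub>R g j1"
      by (simp add: P_def g_def matrix_vector_right_distrib matrix_vector_mult_scaleR)
    ultimately have "(\<lambda>x. W *v x + b) ` paral (c + r *\<^sub>R column j1 U) ((\<lambda>j. column j U)(j1 := (1 - r) *\<^sub>R column j1 U))
        = paral (P + r *\<^sub>R g j1) (g(j1 := (1 - r) *\<^sub>R g j1))"
      by (simp add: image_paral)
    then show ?thesis by (simp only: bbox_upd m_def M_def)
  qed
  have mF: "measure lebesgue (cbox (\<chi> i. P$i + min 0 (g j1 $ i) + m i) (\<chi> i. P$i + max 0 (g j1 $ i) + M i))
      = (\<Prod>i\<in>UNIV. \<bar>v i\<bar> + z i)"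
    using meas_box_gen[of m M P "g j1", OF mM] by (simp add: Mm v_def)
  have mL: "measure lebesgue (cbox (\<chi> i. P$i + min 0 ((r *\<^sub>R g j1) $ i) + m i) (\<chi> i. P$i + max 0 ((r *\<^sub>R g j1) $ i) + M i))
      = (\<Prod>i\<in>UNIV. r * \<bar>v i\<bar> + z i)"
    using assms meas_box_gen[of m M P "r *\<^sub>R g j1", OF mM] by (simp add: Mm v_def abs_mult)
  have mR: "measure lebesgue (cbox (\<chi> i. (P + r *\<^sub>R g j1)$i + min 0 (((1 - r) *\<^sub>R g j1) $ i) + m i)
             (\<chi> i. (P + r *\<^sub>R g j1)$i + max 0 (((1 - r) *\<^sub>R g j1) $ i) + M i))
      = (\<Prod>i\<in>UNIV. (1 - r) * \<bar>v i\<bar> + z i)"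
    using assms meas_box_gen[of m M "P + r *\<^sub>R g j1" "(1 - r) *\<^sub>R g j1", OF mM] by (simp add: Mm v_def abs_mult)
  have mI: "measure lebesgue (cbox (\<chi> i. P$i + min 0 ((r *\<^sub>R g j1) $ i) + m i) (\<chi> i. P$i + max 0 ((r *\<^sub>R g j1) $ i) + M i)
       \<inter> cbox (\<chi> i. (P + r *\<^sub>R g j1)$i + min 0 (((1 - r) *\<^sub>R g j1) $ i) + m i)
             (\<chi> i. (P + r *\<^sub>R g j1)$i + max 0 (((1 - r) *\<^sub>R g j1) $ i) + M i))
      = (\<Prod>i\<in>UNIV. z i)"
  proof -
    have le: "(\<chi> i. max (P$i + min 0 (r * v i) + m i) (P$i + r * v i + min 0 ((1 - r) * v i) + m i)) $ i
        \<le> (\<chi> i. min (P$i + max 0 (r * v i) + M i) (P$i + r * v i + max 0 ((1 - r) * v i) + M i)) $ i" for i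
      using coord(1)[OF assms mM[of i], where v = "v i" and q = "P$i"] by simp
    have eq: "min (P$i + max 0 (r * v i) + M i) (P$i + r * v i + max 0 ((1 - r) * v i) + M i)
        - max (P$i + min 0 (r * v i) + m i) (P$i + r * v i + min 0 ((1 - r) * v i) + m i) = z i" for i
      using coord(2)[OF assms mM[of i], where v = "v i" and q = "P$i"] by (simp add: Mm)
    have "measure lebesgue (cbox (\<chi> i. max (P$i + min 0 (r * v i) + m i) (P$i + r * v i + min 0 ((1 - r) * v i) + m i))
       (\<chi> i. min (P$i + max 0 (r * v i) + M i) (P$i + r * v i + max 0 ((1 - r) * v i) + M i))) = (\<Prod>i\<in>UNIV. z i)"
      using meas_cbox[OF le] eq by simp
    then show ?thesis
      unfolding int_cbox by (simp add: v_def algebra_simps)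
  qed
  show ?thesis
    unfolding F L R
    apply (subst measure_Un3)
      apply (rule lmeasurable_cbox)
     apply (rule lmeasurable_cbox)
    unfolding mF mL mR mI alg
    by (simp add: v_def z_def g_def)
qed

end
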